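(* Let $\mathbf{J}\in\mathbb{R}^{n\times p}$, $\mathbf{J}'\in\mathbb{R}^{n\times q}$, $\mathbf{K}=\mathbf{J}\mathbf{J}^{\top}$ positive definite, $\mathbf{S}=\mathbf{J}'\mathbf{J}'^{\top}$, $\sigma>0$, and $\mathbf{Y}\in\mathbb{R}^n\setminus\{0\}$. Define $$\mathcal{R}(\boldsymbol{\theta})=\|\mathbf{Y}-\mathbf{K}(\mathbf{K}+\sigma\mathbf{I})^{-1}\mathbf{Y}\|^2,\qquad \mathcal{R}(\boldsymbol{\theta}\cup\hat{\boldsymbol{\theta}})=\|\mathbf{Y}-(\mathbf{K}+\mathbf{S})(\mathbf{K}+\mathbf{S}+\sigma\mathbf{I})^{-1}\mathbf{Y}\|^2,$$ let $\eta=\|\mathbf{K}^{-1/2}\mathbf{S}\mathbf{K}^{-1/2}\|$ and assume $\eta<1$. If $\kappa(\mathbf{K}+\sigma\mathbf{I})\le c$, then with $a=\frac{c}{(1-\eta)^2}$, $$\frac{\lambda_{\max}(\mathbf{K}+\mathbf{S}+\sigma\mathbf{I})}{a\,\lambda_{\max}(\mathbf{K}+\sigma\mathbf{I})}\le\left(\frac{\mathcal{R}(\boldsymbol{\theta}\cup\hat{\boldsymbol{\theta}})}{\mathcal{R}(\boldsymbol{\theta})}\right)^{1/2}\le\frac{a\,\lambda_{\max}(\mathbf{K}+\mathbf{S}+\sigma\mathbf{I})}{\lambda_{\max}(\mathbf{K}+\sigma\mathbf{I})}.$$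
   Context: $\kappa(\mathbf{A})=\lambda_{\max}(\mathbf{A})/\lambda_{\min}(\mathbf{A})$ is the condition number of a positive definite matrix; norms of matrices are spectral norms. In the application, $\mathbf{K}$ is the neural tangent kernel Gram matrix on training inputs $\mathbf{x}_1,\dots,\mathbf{x}_n$ induced by the trainable parameters $\boldsymbol{\theta}$ ($\mathbf{J}$ = Jacobian of outputs w.r.t. $\boldsymbol{\theta}$), $\mathbf{S}$ is the kernel induced by additional parameters $\hat{\boldsymbol{\theta}}$, $[\mathbf{S}]_{ij}=\nabla_{\hat{\boldsymbol{\theta}}}f(\mathbf{x}_i)\nabla_{\hat{\boldsymbol{\theta}}}f(\mathbf{x}_j)^{\top}$, $\mathbf{Y}$ the training targets, and $\mathcal{R}(\cdot)$ the training squared residual of NTK kernel ridge regression with regularization $\sigma$ for the respective parameter set (the linearized proxy for the empirical risk of fine-tuning those parameters). *)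

theory Defs
  imports "HOL-Analysis.Analysis"
begin

definition symmetric_mat :: "real^'n^'n \<Rightarrow> bool" where
  "symmetric_mat A \<longleftrightarrow> transpose A = A"

definition pos_def :: "real^'n^'n \<Rightarrow> bool" where
  "pos_def A \<longleftrightarrow> symmetric_mat A \<and> (\<forall>x. x \<noteq> 0 \<longrightarrow> x \<bullet> (A *v x) > 0)"

definition pos_semidef :: "real^'n^'n \<Rightarrow> bool" where
  "pos_semidef A \<longleftrightarrow> symmetric_mat A \<and> (\<forall>x. x \<bullet> (A *v x) \<ge> 0)"

definition eigenvalues :: "real^'n^'n \<Rightarrow> real set" where
  "eigenvalues A = {e. \<exists>v. v \<noteq> 0 \<and> A *v v = e *\<^sub>R v}"

definition lambda_max :: "real^'n^'n \<Rightarrow> real" where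
  "lambda_max A = Max (eigenvalues A)"

definition lambda_min :: "real^'n^'n \<Rightarrow> real" where
  "lambda_min A = Min (eigenvalues A)"

definition cond_num :: "real^'n^'n \<Rightarrow> real" where
  "cond_num A = lambda_max A / lambda_min A"

definition spec_norm :: "real^'m^'n \<Rightarrow> real" where
  "spec_norm A = onorm (\<lambda>x. A *v x)"

definition mat_sqrt :: "real^'n^'n \<Rightarrow> real^'n^'n" where
  "mat_sqrt A = (THE B. pos_semidef B \<and> B ** B = A)"

definition krr_residual :: "real^'n^'n \<Rightarrow> real \<Rightarrow> real^'n \<Rightarrow> real" where
  "krr_residual G \<sigma> Y = (norm (Y - (G ** matrix_inv (G + \<sigma> *\<^sub>R mat 1)) *v Y))\<^sup>2"

end

theory Submission
  imports Defs
begin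


lemma sym_inner:
  assumes "symmetric_mat A"
  shows "x \<bullet> (A *v y) = (A *v x) \<bullet> y"
proof -
  have "(A *v x) \<bullet> y = (x v* transpose A) \<bullet> y" by simp
  also have "\<dots> = x \<bullet> (A *v y)" using assms unfolding symmetric_mat_def by (simp add: dot_lmul_matrix)
  finally show ?thesis by simp
qed

lemma quad_nonpos_lin0:
  fixes p q :: real
  assumes "\<And>t. 2 * t * p + t^2 * q \<le> 0"
  shows "p = 0"
proof (rule ccontr)
  assume "p \<noteq> 0"
  define t where "t = p / (\<bar>q\<bar> + 1)"
  have d: "\<bar>q\<bar> + 1 > 0" by simp
  have "2 * t * p = 2 * p^2 / (\<bar>q\<bar> + 1)" unfolding t_def by (simp add: power2_eq_square)
  moreover have "t^2 * q \<ge> - (t^2 * \<bar>q\<bar>)" proof -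
    have "t^2 * (q + \<bar>q\<bar>) \<ge> 0" by (rule mult_nonneg_nonneg) auto
    thus ?thesis by (simp add: algebra_simps)
  qed
  moreover have "t^2 * \<bar>q\<bar> = p^2 * (\<bar>q\<bar> / (\<bar>q\<bar> + 1)) / (\<bar>q\<bar> + 1)" unfolding t_def by (simp add: power2_eq_square field_simps)
  moreover have "\<bar>q\<bar> / (\<bar>q\<bar> + 1) < 1" using d by simp
  moreover have "p^2 > 0" using \<open>p \<noteq> 0\<close> by simp
  ultimately have "2 * t * p + t^2 * q > 0"
  proof -
    assume a: "2 * t * p = 2 * p\<^sup>2 / (\<bar>q\<bar> + 1)" "- (t\<^sup>2 * \<bar>q\<bar>) \<le> t\<^sup>2 * q"
      "t\<^sup>2 * \<bar>q\<bar> = p\<^sup>2 * (\<bar>q\<bar> / (\<bar>q\<bar> + 1)) / (\<bar>q\<bar> + 1)" "\<bar>q\<bar> / (\<bar>q\<bar> + 1) < 1" "0 < p\<^sup>2"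
    have "p\<^sup>2 * (\<bar>q\<bar> / (\<bar>q\<bar> + 1)) < p^2 * 1" using a(4,5) by (rule mult_strict_left_mono)
    hence "p\<^sup>2 * (\<bar>q\<bar> / (\<bar>q\<bar> + 1)) / (\<bar>q\<bar> + 1) < p^2 / (\<bar>q\<bar> + 1)" using d by (simp add: divide_strict_right_mono del: times_divide_eq_right)
    hence "t\<^sup>2 * \<bar>q\<bar> < p^2 / (\<bar>q\<bar> + 1)" using a(3) by linarith
    moreover have "2 * p\<^sup>2 / (\<bar>q\<bar> + 1) = 2 * (p\<^sup>2 / (\<bar>q\<bar> + 1))" by simp
    moreover have "p\<^sup>2 / (\<bar>q\<bar> + 1) > 0" using a(5) d by simp
    ultimately show ?thesis using a(1,2) by linarith
  qed
  with assms[of t] show False by simp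
qed

lemma spectral_sub:
  fixes A :: "real^'n^'n"
  assumes sym: "symmetric_mat A"
  shows "subspace V \<Longrightarrow> (\<forall>x\<in>V. A *v x \<in> V) \<Longrightarrow> \<exists>B. B \<subseteq> V \<and> finite B \<and>
    (\<forall>b\<in>B. norm b = 1 \<and> A *v b = (b \<bullet> (A *v b)) *\<^sub>R b) \<and> pairwise orthogonal B \<and> V \<subseteq> span B"
proof (induction "dim V" arbitrary: V rule: less_induct)
  case less
  show ?case
  proof (cases "V = {0}")
    case True then show ?thesis by (intro exI[of _ "{}"]) auto
  next
    case False
    then obtain v where v: "v \<in> V" "v \<noteq> 0" using less.prems(1) subspace_0 by blast
    define Sp where "Sp = V \<inter> sphere 0 1"
    have cSp: "compact Sp" unfolding Sp_def using closed_subspace[OF less.prems(1)]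
      by (metis Int_commute compact_Int_closed compact_sphere)
    have "(1/norm v) *\<^sub>R v \<in> Sp" unfolding Sp_def using v less.prems(1) by (simp add: subspace_scale)
    hence neSp: "Sp \<noteq> {}" by blast
    have cont: "continuous_on Sp (\<lambda>x. x \<bullet> (A *v x))"
      by (intro continuous_intros linear_continuous_on matrix_vector_mul_linear bounded_linear_inner_left) 
    obtain u where u: "u \<in> Sp" "\<forall>y\<in>Sp. y \<bullet> (A *v y) \<le> u \<bullet> (A *v u)"
      using continuous_attains_sup[OF cSp neSp cont] by blast
    define l where "l = u \<bullet> (A *v u)"
    have uV: "u \<in> V" and nu: "norm u = 1" using u(1) Sp_def by auto
    have uu: "u \<bullet> u = 1" using nu by (simp add: power2_norm_eq_inner[symmetric])
    have bound: "x \<bullet> (A *v x) \<le> l * (x \<bullet> x)" if "x \<in> V" for x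
    proof (cases "x = 0")
      case True thus ?thesis by simp
    next
      case False
      let ?y = "(1/norm x) *\<^sub>R x"
      have "?y \<in> Sp" using that False less.prems(1) by (simp add: Sp_def subspace_scale)
      hence "?y \<bullet> (A *v ?y) \<le> l" using u(2) l_def by auto
      moreover have "?y \<bullet> (A *v ?y) = (x \<bullet> (A *v x)) / (x \<bullet> x)"
        by (simp add: matrix_vector_mult_scaleR power2_eq_square power2_norm_eq_inner[symmetric])
      moreover have "x \<bullet> x > 0" using False by simp
      ultimately show ?thesis by (simp add: pos_divide_le_eq)
    qed
    have perp: "w \<bullet> (A *v u) = 0" if "w \<in> V" "w \<bullet> u = 0" for w
    proof -
      have "2 * t * (w \<bullet> (A *v u)) + t^2 * (w \<bullet> (A *v w) - l * (w \<bullet> w)) \<le> 0" for t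
      proof -
        have "(u + t *\<^sub>R w) \<in> V" using less.prems(1) uV that(1) by (simp add: subspace_add subspace_scale)
        from bound[OF this] have "(u + t*\<^sub>R w) \<bullet> (A *v (u + t *\<^sub>R w)) \<le> l * ((u + t*\<^sub>R w) \<bullet> (u + t *\<^sub>R w))" .
        moreover have "(u + t*\<^sub>R w) \<bullet> (A *v (u + t *\<^sub>R w)) = l + 2*t*(w \<bullet> (A *v u)) + t^2 * (w \<bullet> (A *v w))"
          using sym_inner[OF sym, of u w]
          by (simp add: algebra_simps inner_add_left inner_add_right l_def power2_eq_square inner_commute)
        moreover have "(u + t*\<^sub>R w) \<bullet> (u + t*\<^sub>R w) = 1 + t^2 * (w \<bullet> w)"
          using uu that(2) by (simp add: inner_add_left inner_add_right inner_commute power2_eq_square)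
        ultimately have "l + 2*t*(w \<bullet> (A *v u)) + t^2 * (w \<bullet> (A *v w)) \<le> l * (1 + t^2 * (w \<bullet> w))" by simp
        moreover have "2 * t * (w \<bullet> (A *v u)) + t^2 * (w \<bullet> (A *v w) - l * (w \<bullet> w)) =
           (l + 2*t*(w \<bullet> (A *v u)) + t^2 * (w \<bullet> (A *v w))) - l * (1 + t^2 * (w \<bullet> w))"
          by (simp add: algebra_simps)
        ultimately show ?thesis by linarith
      qed
      thus ?thesis by (rule quad_nonpos_lin0)
    qed
    have eig: "A *v u = l *\<^sub>R u"
    proof -
      define w where "w = A *v u - l *\<^sub>R u"
      have wV: "w \<in> V" using less.prems uV unfolding w_def by (simp add: subspace_diff subspace_scale)
      have "w \<bullet> u = 0" unfolding w_def l_def using uu by (simp add: inner_diff_left inner_diff_right inner_commute)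
      hence "w \<bullet> (A *v u) = 0" using perp wV by blast
      hence "w \<bullet> w = 0" using \<open>w \<bullet> u = 0\<close> by (simp add: w_def inner_diff_right)
      thus ?thesis using w_def by simp
    qed
    define W where "W = {x \<in> V. x \<bullet> u = 0}"
    have sW: "subspace W" using less.prems(1) unfolding W_def subspace_def
      by (auto simp: inner_add_left)
    have iW: "\<forall>x\<in>W. A *v x \<in> W"
    proof
      fix x assume "x \<in> W"
      hence "x \<in> V" "x \<bullet> u = 0" by (auto simp: W_def)
      moreover have "(A *v x) \<bullet> u = x \<bullet> (A *v u)" using sym_inner[OF sym] by simp
      ultimately show "A *v x \<in> W" using less.prems(2) eig by (simp add: W_def inner_commute)
    qed
    have "W \<subseteq> V" "u \<notin> W" using uV uu by (auto simp: W_def)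
    hence "W \<subset> V" using uV by blast
    moreover have "span W = W" "span V = V" using sW less.prems(1) by (simp_all add: real_vector.span_eq_iff)
    ultimately have "span W \<subset> span V" by metis
    hence "dim W < dim V" by (rule dim_psubset)
    from less.hyps[OF this sW iW] obtain BW where BW: "BW \<subseteq> W" "finite BW"
      "\<forall>b\<in>BW. norm b = 1 \<and> A *v b = (b \<bullet> (A *v b)) *\<^sub>R b" "pairwise orthogonal BW" "W \<subseteq> span BW"
      by blast
    show ?thesis
    proof (intro exI[of _ "insert u BW"] conjI)
      show "insert u BW \<subseteq> V" using BW(1) uV by (auto simp: W_def)
      show "finite (insert u BW)" using BW(2) by simp
      show "\<forall>b\<in>insert u BW. norm b = 1 \<and> A *v b = (b \<bullet> (A *v b)) *\<^sub>R b"
        using BW(3) nu eig l_def by auto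
      show "pairwise orthogonal (insert u BW)"
        using BW(1,4) by (auto simp: pairwise_insert orthogonal_def W_def inner_commute)
      show "V \<subseteq> span (insert u BW)"
      proof
        fix x assume xV: "x \<in> V"
        have "x - (x \<bullet> u) *\<^sub>R u \<in> W" using xV uV uu less.prems(1)
          by (simp add: W_def subspace_diff subspace_scale inner_diff_left)
        hence "x - (x \<bullet> u) *\<^sub>R u \<in> span (insert u BW)" using BW(5) span_mono[of BW "insert u BW"] by blast
        moreover have "(x \<bullet> u) *\<^sub>R u \<in> span (insert u BW)" by (simp add: span_base span_scale)
        ultimately have "(x - (x \<bullet> u) *\<^sub>R u) + (x \<bullet> u) *\<^sub>R u \<in> span (insert u BW)" by (rule span_add)
        thus "x \<in> span (insert u BW)" by simp
      qed
    qed
  qed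
qed

definition ONB :: "real^'n^'n \<Rightarrow> (real^'n) set \<Rightarrow> bool" where
  "ONB A B \<longleftrightarrow> finite B \<and> B \<noteq> {} \<and> (\<forall>b\<in>B. norm b = 1 \<and> A *v b = (b \<bullet> (A *v b)) *\<^sub>R b)
     \<and> pairwise orthogonal B \<and> (\<forall>x. x = (\<Sum>b\<in>B. (x \<bullet> b) *\<^sub>R b))"

lemma onb_delta:
  assumes "finite B" "\<forall>b\<in>B. norm b = 1" "pairwise orthogonal B" "b \<in> B" "c \<in> B"
  shows "b \<bullet> c = (if b = c then 1 else 0)"
proof (cases "b = c")
  case True thus ?thesis using assms by (simp add: power2_norm_eq_inner[symmetric])
next
  case False thus ?thesis using assms by (auto simp: pairwise_def orthogonal_def)
qed

lemma onb_coef_sum: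
  assumes "finite B" "\<forall>b\<in>B. norm b = 1" "pairwise orthogonal B" "c \<in> B"
  shows "(\<Sum>b\<in>B. (x \<bullet> b) *\<^sub>R b) \<bullet> c = x \<bullet> c"
proof -
  have "(\<Sum>b\<in>B. (x \<bullet> b) *\<^sub>R b) \<bullet> c = (\<Sum>b\<in>B. (x \<bullet> b) * (b \<bullet> c))" by (simp add: inner_sum_left)
  also have "\<dots> = (\<Sum>b\<in>B. if b = c then x \<bullet> b else 0)"
    by (rule sum.cong) (use assms onb_delta[OF assms(1-3)] in auto)
  also have "\<dots> = x \<bullet> c" using assms by (simp add: sum.delta')
  finally show ?thesis .
qed

lemma onb_exists:
  fixes A :: "real^'n^'n"
  assumes "symmetric_mat A"
  shows "\<exists>B. ONB A B"
proof -
  obtain B where B: "finite B" "\<forall>b\<in>B. norm b = 1 \<and> A *v b = (b \<bullet> (A *v b)) *\<^sub>R b"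
     "pairwise orthogonal B" "UNIV \<subseteq> span B"
    using spectral_sub[OF assms, of UNIV] by auto
  have exp: "x = (\<Sum>b\<in>B. (x \<bullet> b) *\<^sub>R b)" for x
  proof -
    define r where "r = x - (\<Sum>b\<in>B. (x \<bullet> b) *\<^sub>R b)"
    have "orthogonal r r"
    proof (rule orthogonal_to_span)
      show "r \<in> span B" using B(4) by auto
      fix y assume "y \<in> B"
      thus "orthogonal r y" using onb_coef_sum[OF B(1) _ B(3), of y x] B(2)
        by (simp add: r_def orthogonal_def inner_diff_left)
    qed
    thus ?thesis by (simp add: r_def orthogonal_self)
  qed
  have "B \<noteq> {}"
  proof
    assume "B = {}"
    hence "(1::real^'n) = 0" using exp[of 1] by simp
    thus False by simp
  qed
  thus ?thesis using B exp unfolding ONB_def by blast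
qed

lemma onb_inner:
  assumes "ONB A B"
  shows "x \<bullet> y = (\<Sum>b\<in>B. (x \<bullet> b) * (y \<bullet> b))"
proof -
  have "x \<bullet> y = x \<bullet> (\<Sum>b\<in>B. (y \<bullet> b) *\<^sub>R b)" using assms unfolding ONB_def by metis
  also have "\<dots> = (\<Sum>b\<in>B. (x \<bullet> b) * (y \<bullet> b))" by (simp add: inner_sum_right mult.commute)
  finally show ?thesis .
qed

lemma onb_eq:
  assumes "ONB A B" "\<forall>b\<in>B. u \<bullet> b = v \<bullet> b"
  shows "u = v"
proof -
  have "u = (\<Sum>b\<in>B. (u \<bullet> b) *\<^sub>R b)" "v = (\<Sum>b\<in>B. (v \<bullet> b) *\<^sub>R b)" using assms(1) unfolding ONB_def by metis+
  moreover have "(\<Sum>b\<in>B. (u \<bullet> b) *\<^sub>R b) = (\<Sum>b\<in>B. (v \<bullet> b) *\<^sub>R b)" using assms(2) by simp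
  ultimately show ?thesis by metis
qed

lemma onb_Acoef:
  assumes "symmetric_mat A" "ONB A B" "b \<in> B"
  shows "(A *v x) \<bullet> b = (b \<bullet> (A *v b)) * (x \<bullet> b)"
proof -
  have "(A *v x) \<bullet> b = x \<bullet> (A *v b)" using sym_inner[OF assms(1)] by simp
  also have "A *v b = (b \<bullet> (A *v b)) *\<^sub>R b" using assms(2,3) unfolding ONB_def by blast
  finally show ?thesis by (metis inner_scaleR_right)
qed

lemma onb_eigs:
  assumes "symmetric_mat A" "ONB A B"
  shows "eigenvalues A = (\<lambda>b. b \<bullet> (A *v b)) ` B"
proof
  show "(\<lambda>b. b \<bullet> (A *v b)) ` B \<subseteq> eigenvalues A"
  proof
    fix e assume "e \<in> (\<lambda>b. b \<bullet> (A *v b)) ` B"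
    then obtain b where b: "b \<in> B" "e = b \<bullet> (A *v b)" by blast
    have "norm b = 1" "A *v b = e *\<^sub>R b" using assms(2) b unfolding ONB_def by auto
    thus "e \<in> eigenvalues A" unfolding eigenvalues_def by (intro CollectI exI[of _ b]) auto
  qed
next
  show "eigenvalues A \<subseteq> (\<lambda>b. b \<bullet> (A *v b)) ` B"
  proof
    fix e assume "e \<in> eigenvalues A"
    then obtain v where v: "v \<noteq> 0" "A *v v = e *\<^sub>R v" unfolding eigenvalues_def by blast
    have "\<exists>b\<in>B. v \<bullet> b \<noteq> 0"
    proof (rule ccontr)
      assume "\<not> ?thesis"
      hence "v \<bullet> v = 0" using onb_inner[OF assms(2), of v v] by simp
      thus False using v by simp
    qed
    then obtain b where b: "b \<in> B" "v \<bullet> b \<noteq> 0" by blast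
    have "e * (v \<bullet> b) = (b \<bullet> (A *v b)) * (v \<bullet> b)" using onb_Acoef[OF assms b(1), of v] v(2) by simp
    hence "e = b \<bullet> (A *v b)" using b(2) by simp
    thus "e \<in> (\<lambda>b. b \<bullet> (A *v b)) ` B" using b by blast
  qed
qed

lemma eig_fin:
  assumes "symmetric_mat A"
  shows "finite (eigenvalues A)" "eigenvalues A \<noteq> {}"
proof -
  obtain B where B: "ONB A B" using onb_exists[OF assms] by blast
  show "finite (eigenvalues A)" "eigenvalues A \<noteq> {}"
    using onb_eigs[OF assms B] B unfolding ONB_def by auto
qed

lemma lmax_in: "symmetric_mat A \<Longrightarrow> lambda_max A \<in> eigenvalues A"
  unfolding lambda_max_def using eig_fin Max_in by blast

lemma lmin_in: "symmetric_mat A \<Longrightarrow> lambda_min A \<in> eigenvalues A"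
  unfolding lambda_min_def using eig_fin Min_in by blast

lemma eig_le_lmax: "symmetric_mat A \<Longrightarrow> e \<in> eigenvalues A \<Longrightarrow> e \<le> lambda_max A"
  unfolding lambda_max_def using eig_fin Max_ge by blast

lemma eig_ge_lmin: "symmetric_mat A \<Longrightarrow> e \<in> eigenvalues A \<Longrightarrow> lambda_min A \<le> e"
  unfolding lambda_min_def using eig_fin Min_le by blast

lemma eig_vec:
  assumes "e \<in> eigenvalues A"
  shows "\<exists>v. norm v = 1 \<and> A *v v = e *\<^sub>R v"
proof -
  obtain v where v: "v \<noteq> 0" "A *v v = e *\<^sub>R v" using assms unfolding eigenvalues_def by blast
  show ?thesis
    by (rule exI[of _ "(1/norm v) *\<^sub>R v"]) (use v in \<open>simp add: matrix_vector_mult_scaleR\<close>)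
qed

lemma quad_expand:
  assumes "symmetric_mat A" "ONB A B"
  shows "x \<bullet> (A *v x) = (\<Sum>b\<in>B. (b \<bullet> (A *v b)) * (x \<bullet> b)^2)"
    and "(A *v x) \<bullet> (A *v x) = (\<Sum>b\<in>B. (b \<bullet> (A *v b))^2 * (x \<bullet> b)^2)"
    and "x \<bullet> x = (\<Sum>b\<in>B. (x \<bullet> b)^2)"
proof -
  show "x \<bullet> (A *v x) = (\<Sum>b\<in>B. (b \<bullet> (A *v b)) * (x \<bullet> b)^2)"
    unfolding onb_inner[OF assms(2), of x "A *v x"]
    by (rule sum.cong[OF refl]) (simp add: onb_Acoef[OF assms] power2_eq_square)
  show "(A *v x) \<bullet> (A *v x) = (\<Sum>b\<in>B. (b \<bullet> (A *v b))^2 * (x \<bullet> b)^2)"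
    unfolding onb_inner[OF assms(2), of "A *v x" "A *v x"]
    by (rule sum.cong[OF refl]) (simp add: onb_Acoef[OF assms] power2_eq_square)
  show "x \<bullet> x = (\<Sum>b\<in>B. (x \<bullet> b)^2)"
    using onb_inner[OF assms(2), of x x] by (simp add: power2_eq_square)
qed

lemma rayleigh:
  assumes "symmetric_mat A"
  shows "lambda_min A * (x \<bullet> x) \<le> x \<bullet> (A *v x)" "x \<bullet> (A *v x) \<le> lambda_max A * (x \<bullet> x)"
proof -
  obtain B where B: "ONB A B" using onb_exists[OF assms] by blast
  have mu: "b \<bullet> (A *v b) \<in> eigenvalues A" if "b \<in> B" for b using onb_eigs[OF assms B] that by blast
  have xx: "x \<bullet> x = (\<Sum>b\<in>B. (x \<bullet> b)^2)" by (rule quad_expand(3)[OF assms B])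
  have xAx: "x \<bullet> (A *v x) = (\<Sum>b\<in>B. (b \<bullet> (A *v b)) * (x \<bullet> b)^2)" by (rule quad_expand(1)[OF assms B])
  have "lambda_min A * (x \<bullet> x) = (\<Sum>b\<in>B. lambda_min A * (x \<bullet> b)^2)"
    unfolding xx by (rule sum_distrib_left)
  also have "\<dots> \<le> (\<Sum>b\<in>B. (b \<bullet> (A *v b)) * (x \<bullet> b)^2)"
  proof (rule sum_mono)
    fix b assume "b \<in> B"
    from eig_ge_lmin[OF assms mu[OF this]] show "lambda_min A * (x \<bullet> b)^2 \<le> (b \<bullet> (A *v b)) * (x \<bullet> b)^2"
      by (rule mult_right_mono) simp
  qed
  finally show "lambda_min A * (x \<bullet> x) \<le> x \<bullet> (A *v x)" unfolding xAx .
  have "(\<Sum>b\<in>B. (b \<bullet> (A *v b)) * (x \<bullet> b)^2) \<le> (\<Sum>b\<in>B. lambda_max A * (x \<bullet> b)^2)"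
  proof (rule sum_mono)
    fix b assume "b \<in> B"
    from eig_le_lmax[OF assms mu[OF this]] show "(b \<bullet> (A *v b)) * (x \<bullet> b)^2 \<le> lambda_max A * (x \<bullet> b)^2"
      by (rule mult_right_mono) simp
  qed
  also have "\<dots> = lambda_max A * (x \<bullet> x)"
    unfolding xx by (rule sum_distrib_left[symmetric])
  finally show "x \<bullet> (A *v x) \<le> lambda_max A * (x \<bullet> x)" unfolding xAx .
qed

lemma psd_norm_le:
  assumes "pos_semidef A"
  shows "norm (A *v x) \<le> lambda_max A * norm x"
proof -
  have sym: "symmetric_mat A" using assms unfolding pos_semidef_def by simp
  obtain B where B: "ONB A B" using onb_exists[OF sym] by blast
  have mu: "b \<bullet> (A *v b) \<in> eigenvalues A" if "b \<in> B" for b using onb_eigs[OF sym B] that by blast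
  have mu0: "0 \<le> b \<bullet> (A *v b)" for b using assms unfolding pos_semidef_def by simp
  have l0: "0 \<le> lambda_max A"
  proof -
    obtain v where v: "norm v = 1" "A *v v = lambda_max A *\<^sub>R v" using eig_vec lmax_in[OF sym] by blast
    have "v \<bullet> (A *v v) = lambda_max A" using v by (simp add: power2_norm_eq_inner[symmetric])
    thus ?thesis using mu0[of v] by simp
  qed
  have "(norm (A *v x))^2 = (\<Sum>b\<in>B. (b \<bullet> (A *v b))^2 * (x \<bullet> b)^2)"
    by (simp add: power2_norm_eq_inner quad_expand(2)[OF sym B])
  also have "\<dots> \<le> (\<Sum>b\<in>B. (lambda_max A)^2 * (x \<bullet> b)^2)"
  proof (rule sum_mono)
    fix b assume "b \<in> B"
    have "(b \<bullet> (A *v b))^2 \<le> (lambda_max A)^2"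
      by (rule power_mono[OF eig_le_lmax[OF sym mu[OF \<open>b \<in> B\<close>]] mu0])
    thus "(b \<bullet> (A *v b))^2 * (x \<bullet> b)^2 \<le> (lambda_max A)^2 * (x \<bullet> b)^2"
      by (rule mult_right_mono) simp
  qed
  also have "\<dots> = (lambda_max A)^2 * (x \<bullet> x)"
    unfolding quad_expand(3)[OF sym B, of x] by (rule sum_distrib_left[symmetric])
  also have "\<dots> = (lambda_max A * norm x)^2"
    by (simp add: power_mult_distrib power2_norm_eq_inner)
  finally have "(norm (A *v x))^2 \<le> (lambda_max A * norm x)^2" .
  thus ?thesis by (rule power2_le_imp_le) (use l0 in simp)
qed

lemma posdef_norm_ge:
  assumes "pos_def A"
  shows "lambda_min A * norm x \<le> norm (A *v x)"
proof (cases "x = 0")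
  case True thus ?thesis by simp
next
  case False
  have sym: "symmetric_mat A" using assms unfolding pos_def_def by simp
  have "lambda_min A * (norm x * norm x) \<le> norm x * norm (A *v x)"
    using rayleigh(1)[OF sym, of x] norm_cauchy_schwarz[of x "A *v x"]
    by (simp add: power2_norm_eq_inner[symmetric] power2_eq_square)
  hence "norm x * (lambda_min A * norm x) \<le> norm x * norm (A *v x)" by (simp add: algebra_simps)
  thus ?thesis using False by simp
qed

lemma posdef_lmin_pos:
  assumes "pos_def A"
  shows "lambda_min A > 0"
proof -
  have sym: "symmetric_mat A" using assms unfolding pos_def_def by simp
  obtain v where v: "norm v = 1" "A *v v = lambda_min A *\<^sub>R v" using eig_vec lmin_in[OF sym] by blast
  have "v \<noteq> 0" using v(1) by auto
  hence "v \<bullet> (A *v v) > 0" using assms unfolding pos_def_def by blast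
  thus ?thesis using v by (simp add: power2_norm_eq_inner[symmetric])
qed

lemma onb_gsum:
  assumes "ONB A B" "c \<in> B"
  shows "(\<Sum>b\<in>B. g b *\<^sub>R b) \<bullet> c = g c"
proof -
  have B: "finite B" "\<forall>b\<in>B. norm b = 1" "pairwise orthogonal B" using assms(1) unfolding ONB_def by auto
  have "(\<Sum>b\<in>B. g b *\<^sub>R b) \<bullet> c = (\<Sum>b\<in>B. g b * (b \<bullet> c))" by (simp add: inner_sum_left)
  also have "\<dots> = (\<Sum>b\<in>B. if b = c then g b else 0)"
    by (rule sum.cong) (use assms onb_delta[OF B] in auto)
  also have "\<dots> = g c" using assms B by (simp add: sum.delta')
  finally show ?thesis .
qed

lemma sym_from_inner:
  fixes A :: "real^'n^'n"
  assumes "\<And>x y. x \<bullet> (A *v y) = (A *v x) \<bullet> y"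
  shows "symmetric_mat A"
proof -
  have "A *v y = transpose A *v y" for y
  proof -
    have "x \<bullet> (A *v y - transpose A *v y) = 0" for x
      using assms[of x y] dot_lmul_matrix[of x "transpose A" y] by (simp add: inner_diff_right)
    from this[of "A *v y - transpose A *v y"] show ?thesis by simp
  qed
  hence "transpose A = A" by (metis matrix_eq)
  thus ?thesis unfolding symmetric_mat_def .
qed

lemma mat_sqrt_props:
  fixes P :: "real^'n^'n"
  assumes pd: "pos_def P"
  shows "pos_semidef (mat_sqrt P) \<and> mat_sqrt P ** mat_sqrt P = P"
proof -
  have symP: "symmetric_mat P" using pd unfolding pos_def_def by simp
  obtain B where B: "ONB P B" using onb_exists[OF symP] by blast
  define mu where "mu b = b \<bullet> (P *v b)" for b
  have mupos: "mu b > 0" if "b \<in> B" for b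
  proof -
    have "b \<noteq> 0" using B that unfolding ONB_def by auto
    thus ?thesis using pd unfolding pos_def_def mu_def by blast
  qed
  define f where "f x = (\<Sum>b\<in>B. (sqrt (mu b) * (x \<bullet> b)) *\<^sub>R b)" for x
  have lin: "linear f"
    by (rule linearI) (simp_all add: f_def inner_add_left algebra_simps sum.distrib scaleR_sum_right)
  define R where "R = matrix f"
  have Rx: "R *v x = f x" for x unfolding R_def using lin by (simp add: matrix_works linear_matrix_vector_mul_eq)
  have coef: "(R *v x) \<bullet> c = sqrt (mu c) * (x \<bullet> c)" if "c \<in> B" for x c
    unfolding Rx f_def using onb_gsum[OF B that] by simp
  have symR: "symmetric_mat R"
  proof (rule sym_from_inner)
    fix x y
    have "x \<bullet> (R *v y) = (\<Sum>b\<in>B. (x \<bullet> b) * ((R *v y) \<bullet> b))" by (rule onb_inner[OF B])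
    also have "\<dots> = (\<Sum>b\<in>B. (y \<bullet> b) * ((R *v x) \<bullet> b))" by (rule sum.cong) (simp_all add: coef)
    also have "\<dots> = (R *v x) \<bullet> y" using onb_inner[OF B, of y "R *v x"] by (simp add: inner_commute)
    finally show "x \<bullet> (R *v y) = (R *v x) \<bullet> y" .
  qed
  have psdR: "pos_semidef R"
    unfolding pos_semidef_def
  proof (intro conjI allI symR)
    fix x
    have "x \<bullet> (R *v x) = (\<Sum>b\<in>B. (x \<bullet> b) * ((R *v x) \<bullet> b))" by (rule onb_inner[OF B])
    also have "\<dots> = (\<Sum>b\<in>B. sqrt (mu b) * (x \<bullet> b)^2)" by (rule sum.cong) (simp_all add: coef power2_eq_square)
    also have "\<dots> \<ge> 0" by (intro sum_nonneg mult_nonneg_nonneg) (auto simp: mupos less_imp_le)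
    finally show "x \<bullet> (R *v x) \<ge> 0" .
  qed
  have RR: "R ** R = P"
  proof -
    have "(R ** R) *v x = P *v x" for x
    proof -
      have "(R ** R) *v x = R *v (R *v x)" by (simp add: matrix_vector_mul_assoc)
      also have "\<dots> = P *v x"
      proof (rule onb_eq[OF B], intro ballI)
        fix b assume b: "b \<in> B"
        have "(R *v (R *v x)) \<bullet> b = sqrt (mu b) * sqrt (mu b) * (x \<bullet> b)" using coef[OF b] by simp
        also have "\<dots> = mu b * (x \<bullet> b)" using mupos[OF b] by simp
        also have "\<dots> = (P *v x) \<bullet> b" using onb_Acoef[OF symP B b] by (simp add: mu_def)
        finally show "(R *v (R *v x)) \<bullet> b = (P *v x) \<bullet> b" .
      qed
      finally show ?thesis .
    qed
    thus ?thesis by (metis matrix_eq)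
  qed
  have uniq: "Q = R" if Q: "pos_semidef Q" "Q ** Q = P" for Q
  proof -
    have symQ: "symmetric_mat Q" using Q unfolding pos_semidef_def by simp
    have Qb: "Q *v b = sqrt (mu b) *\<^sub>R b" if b: "b \<in> B" for b
    proof -
      define s where "s = sqrt (mu b)"
      have s0: "s > 0" using mupos[OF b] s_def by simp
      define y where "y = Q *v b - s *\<^sub>R b"
      have Pb: "P *v b = mu b *\<^sub>R b" using B b unfolding ONB_def mu_def by blast
      have "Q *v y + s *\<^sub>R y = (Q ** Q) *v b - (s * s) *\<^sub>R b"
        by (simp add: y_def matrix_vector_mult_diff_distrib matrix_vector_mult_scaleR matrix_vector_mul_assoc[symmetric] algebra_simps)
      also have "\<dots> = 0" using Q(2) Pb mupos[OF b] by (simp add: s_def)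
      finally have "Q *v y + s *\<^sub>R y = 0" .
      hence "y \<bullet> (Q *v y) + s * (y \<bullet> y) = 0" by (metis inner_add_right inner_scaleR_right inner_zero_right)
      moreover have "y \<bullet> (Q *v y) \<ge> 0" using Q unfolding pos_semidef_def by simp
      ultimately have "s * (y \<bullet> y) \<le> 0" by linarith
      hence "y \<bullet> y \<le> 0" using s0 by (simp add: mult_le_0_iff)
      hence "y = 0" by (metis inner_ge_zero inner_eq_zero_iff order_antisym)
      thus ?thesis by (simp add: y_def s_def)
    qed
    have "Q *v x = R *v x" for x
    proof (rule onb_eq[OF B], intro ballI)
      fix b assume b: "b \<in> B"
      have "(Q *v x) \<bullet> b = x \<bullet> (Q *v b)" using sym_inner[OF symQ] by simp
      also have "\<dots> = sqrt (mu b) * (x \<bullet> b)" using Qb[OF b] by simp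
      finally show "(Q *v x) \<bullet> b = (R *v x) \<bullet> b" using coef[OF b] by simp
    qed
    thus ?thesis by (metis matrix_eq)
  qed
  have "\<exists>!Q. pos_semidef Q \<and> Q ** Q = P" using psdR RR uniq by blast
  from theI'[OF this] show ?thesis unfolding mat_sqrt_def .
qed




lemma minv:
  assumes "invertible (M::real^'n^'n)"
  shows "M ** matrix_inv M = mat 1" "matrix_inv M ** M = mat 1"
proof -
  have "M ** matrix_inv M = mat 1 \<and> matrix_inv M ** M = mat 1"
    using assms unfolding invertible_def matrix_inv_def by (rule someI_ex)
  thus "M ** matrix_inv M = mat 1" "matrix_inv M ** M = mat 1" by auto
qed

lemma posdef_invertible:
  assumes "pos_def (M::real^'n^'n)"
  shows "invertible M"
proof -
  have "\<forall>x. M *v x = 0 \<longrightarrow> x = 0"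
  proof (intro allI impI)
    fix x assume "M *v x = 0"
    hence "x \<bullet> (M *v x) = 0" by simp
    thus "x = 0" using assms unfolding pos_def_def by force
  qed
  thus ?thesis unfolding invertible_left_inverse matrix_left_invertible_ker .
qed

lemma inv_apply:
  assumes "invertible (M::real^'n^'n)"
  shows "M *v (matrix_inv M *v x) = x" "matrix_inv M *v (M *v x) = x"
  using minv[OF assms] by (simp_all add: matrix_vector_mul_assoc)

lemma posdef_inv_posdef:
  assumes pd: "pos_def (M::real^'n^'n)"
  shows "pos_def (matrix_inv M)"
proof -
  have inv: "invertible M" by (rule posdef_invertible[OF pd])
  have sym: "symmetric_mat M" using pd unfolding pos_def_def by simp
  let ?N = "matrix_inv M"
  have "symmetric_mat ?N"
  proof (rule sym_from_inner)
    fix x y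
    have "x \<bullet> (?N *v y) = (M *v (?N *v x)) \<bullet> (?N *v y)" using inv_apply[OF inv] by simp
    also have "\<dots> = (?N *v x) \<bullet> (M *v (?N *v y))" using sym_inner[OF sym] by simp
    also have "\<dots> = (?N *v x) \<bullet> y" using inv_apply[OF inv] by simp
    finally show "x \<bullet> (?N *v y) = (?N *v x) \<bullet> y" .
  qed
  moreover have "x \<bullet> (?N *v x) > 0" if "x \<noteq> 0" for x
  proof -
    define z where "z = ?N *v x"
    have Mz: "M *v z = x" using inv_apply[OF inv] z_def by simp
    hence "z \<noteq> 0" using that by auto
    hence "z \<bullet> (M *v z) > 0" using pd unfolding pos_def_def by blast
    thus ?thesis using Mz sym_inner[OF sym, of z z] by (simp add: z_def inner_commute)
  qed
  ultimately show ?thesis unfolding pos_def_def by blast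
qed

lemma gram_psd:
  fixes J :: "real^'q^'n"
  shows "pos_semidef (J ** transpose J)"
proof -
  have "symmetric_mat (J ** transpose J)" unfolding symmetric_mat_def by (simp add: matrix_transpose_mul)
  moreover have "x \<bullet> ((J ** transpose J) *v x) \<ge> 0" for x
  proof -
    have "x \<bullet> ((J ** transpose J) *v x) = (x v* J) \<bullet> (transpose J *v x)"
      by (simp add: matrix_vector_mul_assoc[symmetric] dot_lmul_matrix)
    also have "\<dots> = (transpose J *v x) \<bullet> (transpose J *v x)" by simp
    finally show ?thesis by simp
  qed
  ultimately show ?thesis unfolding pos_semidef_def by blast
qed

lemma shift_apply: "(G + s *\<^sub>R mat 1) *v x = G *v x + s *\<^sub>R (x::real^'n)"
  by (simp add: matrix_vector_mult_add_rdistrib scaleR_matrix_vector_assoc[symmetric])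

lemma psd_add:
  assumes "pos_semidef (G::real^'n^'n)" "pos_semidef H"
  shows "pos_semidef (G + H)"
proof -
  have sG: "symmetric_mat G" and sH: "symmetric_mat H" using assms unfolding pos_semidef_def by auto
  have "symmetric_mat (G + H)"
  proof (rule sym_from_inner)
    fix x y
    show "x \<bullet> ((G + H) *v y) = ((G + H) *v x) \<bullet> y"
      using sym_inner[OF sG, of x y] sym_inner[OF sH, of x y]
      by (simp add: matrix_vector_mult_add_rdistrib inner_add_left inner_add_right)
  qed
  moreover have "x \<bullet> ((G + H) *v x) \<ge> 0" for x
    using assms by (simp add: pos_semidef_def matrix_vector_mult_add_rdistrib inner_add_right add_nonneg_nonneg)
  ultimately show ?thesis unfolding pos_semidef_def by blast
qed

lemma psd_shift:
  assumes "pos_semidef (G::real^'n^'n)" "s > 0"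
  shows "pos_def (G + s *\<^sub>R mat 1)"
proof -
  have sG: "symmetric_mat G" using assms unfolding pos_semidef_def by auto
  have "symmetric_mat (G + s *\<^sub>R mat 1)"
  proof (rule sym_from_inner)
    fix x y
    show "x \<bullet> ((G + s *\<^sub>R mat 1) *v y) = ((G + s *\<^sub>R mat 1) *v x) \<bullet> y"
      using sym_inner[OF sG, of x y] inner_commute[of x y]
      by (simp add: shift_apply inner_add_left inner_add_right)
  qed
  moreover have "x \<bullet> ((G + s *\<^sub>R mat 1) *v x) > 0" if "x \<noteq> 0" for x
  proof -
    have "x \<bullet> (G *v x) \<ge> 0" using assms unfolding pos_semidef_def by simp
    moreover have "s * (x \<bullet> x) > 0" using assms(2) that by simp
    ultimately show ?thesis by (simp add: shift_apply inner_add_right)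
  qed
  ultimately show ?thesis unfolding pos_def_def by blast
qed

lemma posdef_psd: "pos_def G \<Longrightarrow> pos_semidef G"
  unfolding pos_def_def pos_semidef_def by (metis inner_zero_left order_le_less)

lemma resid:
  assumes "pos_semidef (G::real^'n^'n)" "s > 0"
  shows "krr_residual G s Y = s^2 * (norm (matrix_inv (G + s *\<^sub>R mat 1) *v Y))^2"
    "(G + s *\<^sub>R mat 1) *v (matrix_inv (G + s *\<^sub>R mat 1) *v Y) = Y"
proof -
  have inv: "invertible (G + s *\<^sub>R mat 1)" by (rule posdef_invertible[OF psd_shift[OF assms]])
  define z where "z = matrix_inv (G + s *\<^sub>R mat 1) *v Y"
  show eq: "(G + s *\<^sub>R mat 1) *v (matrix_inv (G + s *\<^sub>R mat 1) *v Y) = Y" using inv_apply[OF inv] by simp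
  hence "G *v z + s *\<^sub>R z = Y" unfolding z_def shift_apply .
  hence "Y - (G ** matrix_inv (G + s *\<^sub>R mat 1)) *v Y = s *\<^sub>R z"
    by (simp add: z_def matrix_vector_mul_assoc[symmetric] algebra_simps)
  thus "krr_residual G s Y = s^2 * (norm (matrix_inv (G + s *\<^sub>R mat 1) *v Y))^2"
    unfolding krr_residual_def z_def using assms(2) by (simp add: power_mult_distrib)
qed




lemma final_arith:
  fixes al be Ga ga eta c a N zA zB :: real
  assumes be: "0<be" and ga: "0<ga" and "be \<le> al" "al \<le> Ga" "be \<le> ga" "Ga \<le> (1+eta)*al" "0 \<le> eta" "eta < 1"
    "al/be \<le> c" "a = c/(1-eta)^2" "0 < zA" "0 \<le> zB" "N \<le> al*zA" "be*zA \<le> N" "N \<le> Ga*zB" "ga*zB \<le> N"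
  shows "Ga/(a*al) \<le> zB/zA \<and> zB/zA \<le> a*Ga/al"
proof -
  have al: "al > 0" using assms by linarith
  have Gap: "Ga > 0" using assms by linarith
  have Np: "N > 0" using assms(11,14) be by (smt (verit) mult_pos_pos)
  have c1: "al/be \<ge> 1" using assms(3) be by simp
  have c1': "c \<ge> 1" using c1 assms(9) by linarith
  have e1: "(1-eta)^2 > 0" using assms(8) by simp
  have e2: "(1-eta)^2 \<le> 1" using assms(7,8) by (simp add: power_le_one)
  have ac: "a \<ge> c" unfolding assms(10) using c1' e1 e2
    by (simp add: le_divide_eq mult_left_le)
  have ap: "a > 0" using ac c1' by linarith
  have zBl: "zB \<ge> N/Ga" using assms(15) Gap by (simp add: divide_le_eq mult.commute)
  have zAu: "zA \<le> N/be" using assms(14) be by (simp add: le_divide_eq mult.commute)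
  have "be/Ga = (N/Ga)/(N/be)" using Np be by (simp add: field_simps)
  also have "\<dots> \<le> zB/zA"
    by (rule frac_le) (use zBl zAu assms(11,12) Np Gap in auto)
  finally have low1: "be/Ga \<le> zB/zA" .
  have "Ga^2 \<le> ((1+eta)*al)^2" using assms(6) Gap by (simp add: power_mono)
  also have "\<dots> = (1+eta)^2 * al^2" by (simp add: power_mult_distrib)
  also have "\<dots> \<le> al^2 / (1-eta)^2"
  proof -
    have "(1+eta)^2 * (1-eta)^2 = (1 - eta^2)^2" by (simp add: power_mult_distrib[symmetric] algebra_simps power2_eq_square)
    also have "\<dots> \<le> 1" using assms(7,8) by (simp add: power_le_one abs_square_le_1 power2_eq_square mult_le_one)
    finally have "(1+eta)^2 * (1-eta)^2 \<le> 1" .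
    hence "(1+eta)^2 * (1-eta)^2 * al^2 \<le> al^2" by (simp add: mult_left_le_one_le mult_le_cancel_right1)
    thus ?thesis using e1 by (simp add: le_divide_eq mult.commute mult.left_commute)
  qed
  also have "\<dots> = (al/be) * al * be / (1-eta)^2" using be by (simp add: power2_eq_square)
  also have "\<dots> \<le> c * al * be / (1-eta)^2"
  proof -
    have "(al/be)*al*be \<le> c*al*be" using assms(9) al be by (intro mult_right_mono) auto
    thus ?thesis using e1 by (intro divide_right_mono) auto
  qed
  also have "\<dots> = a * al * be" unfolding assms(10) by simp
  finally have G2: "Ga^2 \<le> a * al * be" .
  have "Ga/(a*al) \<le> be/Ga"
    using G2 ap al Gap by (simp add: divide_le_eq le_divide_eq power2_eq_square mult.commute mult.left_commute)
  hence lower: "Ga/(a*al) \<le> zB/zA" using low1 by linarith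
  have zBu: "zB \<le> N/ga" using assms(16) ga by (simp add: le_divide_eq mult.commute)
  have zAl: "zA \<ge> N/al" using assms(13) al by (simp add: divide_le_eq mult.commute)
  have "zB/zA \<le> (N/ga)/(N/al)"
    by (rule frac_le) (use zBu zAl assms(11,12) Np al ga in auto)
  also have "\<dots> = al/ga" using Np ga al by (simp add: field_simps)
  also have "\<dots> \<le> al/be" using assms(5) be al by (simp add: frac_le)
  also have "\<dots> \<le> a" using assms(9) ac by linarith
  also have "\<dots> \<le> a*Ga/al" using ap al assms(4) by (simp add: le_divide_eq mult_left_mono)
  finally show ?thesis using lower by simp
qed




theorem theorem7:
  fixes J :: "real^'p^'n" and J' :: "real^'q^'n" and Y :: "real^'n"
    and \<sigma> \<eta> c a :: real and K S :: "real^'n^'n"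
  assumes K_def: "K = J ** transpose J"
    and S_def: "S = J' ** transpose J'"
    and Kpd: "pos_def K"
    and sigma_pos: "\<sigma> > 0"
    and Y_nz: "Y \<noteq> 0"
    and eta_def: "\<eta> = spec_norm (mat_sqrt (matrix_inv K) ** S ** mat_sqrt (matrix_inv K))"
    and eta_lt: "\<eta> < 1"
    and cond_le: "cond_num (K + \<sigma> *\<^sub>R mat 1) \<le> c"
    and a_def: "a = c / (1 - \<eta>)\<^sup>2"
  shows "lambda_max (K + S + \<sigma> *\<^sub>R mat 1) / (a * lambda_max (K + \<sigma> *\<^sub>R mat 1))
           \<le> sqrt (krr_residual (K + S) \<sigma> Y / krr_residual K \<sigma> Y)
       \<and> sqrt (krr_residual (K + S) \<sigma> Y / krr_residual K \<sigma> Y)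
           \<le> a * lambda_max (K + S + \<sigma> *\<^sub>R mat 1) / lambda_max (K + \<sigma> *\<^sub>R mat 1)"
proof -
  have psdK: "pos_semidef K" using posdef_psd[OF Kpd] .
  have symK: "symmetric_mat K" using Kpd unfolding pos_def_def by simp
  have psdS: "pos_semidef S" unfolding S_def by (rule gram_psd)
  have psdKS: "pos_semidef (K + S)" by (rule psd_add[OF psdK psdS])
  define A where "A = K + \<sigma> *\<^sub>R mat 1"
  define Bm where "Bm = K + S + \<sigma> *\<^sub>R mat 1"
  have pdA: "pos_def A" unfolding A_def by (rule psd_shift[OF psdK sigma_pos])
  have pdB: "pos_def Bm" unfolding Bm_def by (rule psd_shift[OF psdKS sigma_pos])
  have symA: "symmetric_mat A" using pdA unfolding pos_def_def by simp
  have symB: "symmetric_mat Bm" using pdB unfolding pos_def_def by simp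
  have Av: "A *v x = K *v x + \<sigma> *\<^sub>R x" for x unfolding A_def by (rule shift_apply)
  have Bv: "Bm *v x = K *v x + S *v x + \<sigma> *\<^sub>R x" for x unfolding Bm_def shift_apply
    by (simp add: matrix_vector_mult_add_rdistrib)
  have qA: "x \<bullet> (A *v x) = x \<bullet> (K *v x) + \<sigma> * (x \<bullet> x)" for x by (simp add: Av inner_add_right)
  have qB: "x \<bullet> (Bm *v x) = x \<bullet> (K *v x) + x \<bullet> (S *v x) + \<sigma> * (x \<bullet> x)" for x by (simp add: Bv inner_add_right)
  have Kq0: "x \<bullet> (K *v x) \<ge> 0" for x using psdK unfolding pos_semidef_def by simp
  have Sq0: "x \<bullet> (S *v x) \<ge> 0" for x using psdS unfolding pos_semidef_def by simp
  define zA where "zA = matrix_inv A *v Y"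
  define zB where "zB = matrix_inv Bm *v Y"
  have rA: "krr_residual K \<sigma> Y = \<sigma>^2 * (norm zA)^2" and AzA: "A *v zA = Y"
    using resid[OF psdK sigma_pos, of Y] unfolding zA_def A_def by auto
  have rB: "krr_residual (K + S) \<sigma> Y = \<sigma>^2 * (norm zB)^2" and BzB: "Bm *v zB = Y"
    using resid[OF psdKS sigma_pos, of Y] unfolding zB_def Bm_def by auto
  have nzA: "norm zA > 0" using AzA Y_nz by auto
  have rho: "sqrt (krr_residual (K + S) \<sigma> Y / krr_residual K \<sigma> Y) = norm zB / norm zA"
  proof -
    have "krr_residual (K + S) \<sigma> Y / krr_residual K \<sigma> Y = (norm zB / norm zA)^2"
      using sigma_pos nzA by (simp add: rA rB power_divide)
    thus ?thesis by simp
  qed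
  define al where "al = lambda_max A"
  define be where "be = lambda_min A"
  define Ga where "Ga = lambda_max Bm"
  define ga where "ga = lambda_min Bm"
  have h1: "norm Y \<le> al * norm zA" using psd_norm_le[OF posdef_psd[OF pdA], of zA] AzA al_def by simp
  have h2: "be * norm zA \<le> norm Y" using posdef_norm_ge[OF pdA, of zA] AzA be_def by simp
  have h3: "norm Y \<le> Ga * norm zB" using psd_norm_le[OF posdef_psd[OF pdB], of zB] BzB Ga_def by simp
  have h4: "ga * norm zB \<le> norm Y" using posdef_norm_ge[OF pdB, of zB] BzB ga_def by simp
  have bep: "be > 0" unfolding be_def by (rule posdef_lmin_pos[OF pdA])
  have gap: "ga > 0" unfolding ga_def by (rule posdef_lmin_pos[OF pdB])
  have beal: "be \<le> al" unfolding be_def al_def by (rule eig_ge_lmin[OF symA lmax_in[OF symA]])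
  have alGa: "al \<le> Ga"
  proof -
    obtain v where v: "norm v = 1" "A *v v = al *\<^sub>R v" using eig_vec lmax_in[OF symA] al_def by blast
    have vv: "v \<bullet> v = 1" using v(1) by (simp add: power2_norm_eq_inner[symmetric])
    have "al = v \<bullet> (A *v v)" using v(2) vv by simp
    also have "\<dots> \<le> v \<bullet> (Bm *v v)" using qA qB Sq0 by (simp add: qA qB)
    also have "\<dots> \<le> Ga" using rayleigh(2)[OF symB, of v] vv Ga_def by simp
    finally show ?thesis .
  qed
  have bega: "be \<le> ga"
  proof -
    obtain v where v: "norm v = 1" "Bm *v v = ga *\<^sub>R v" using eig_vec lmin_in[OF symB] ga_def by blast
    have vv: "v \<bullet> v = 1" using v(1) by (simp add: power2_norm_eq_inner[symmetric])
    have "be \<le> v \<bullet> (A *v v)" using rayleigh(1)[OF symA, of v] vv be_def by simp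
    also have "\<dots> \<le> v \<bullet> (Bm *v v)" using Sq0 by (simp add: qA qB)
    also have "\<dots> = ga" using v(2) vv by simp
    finally show ?thesis .
  qed
  have eta0: "\<eta> \<ge> 0" unfolding eta_def spec_norm_def by (rule onorm_pos_le) simp
  have SK: "x \<bullet> (S *v x) \<le> \<eta> * (x \<bullet> (K *v x))" for x
  proof -
    define R where "R = mat_sqrt (matrix_inv K)"
    have Rp: "pos_semidef R" "R ** R = matrix_inv K"
      using mat_sqrt_props[OF posdef_inv_posdef[OF Kpd]] R_def by auto
    have symR: "symmetric_mat R" using Rp(1) unfolding pos_semidef_def by simp
    have invK: "invertible K" by (rule posdef_invertible[OF Kpd])
    define M where "M = R ** S ** R"
    define y where "y = R *v (K *v x)"
    have Ry: "R *v y = x"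
    proof -
      have "R *v y = (R ** R) *v (K *v x)" unfolding y_def by (simp add: matrix_vector_mul_assoc matrix_mul_assoc)
      also have "\<dots> = x" unfolding Rp(2) by (rule inv_apply(2)[OF invK])
      finally show ?thesis .
    qed
    have "x \<bullet> (S *v x) = (R *v y) \<bullet> (S *v (R *v y))" using Ry by simp
    also have "\<dots> = y \<bullet> (R *v (S *v (R *v y)))" using sym_inner[OF symR] by simp
    also have "\<dots> = y \<bullet> (M *v y)" by (simp add: M_def matrix_vector_mul_assoc matrix_mul_assoc)
    also have "\<dots> \<le> norm y * norm (M *v y)" by (rule norm_cauchy_schwarz)
    also have "\<dots> \<le> norm y * (\<eta> * norm y)"
    proof (rule mult_left_mono)
      show "norm (M *v y) \<le> \<eta> * norm y" unfolding eta_def spec_norm_def M_def R_def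
        by (rule onorm) simp
    qed simp
    also have "\<dots> = \<eta> * (y \<bullet> y)" by (simp add: power2_norm_eq_inner[symmetric] power2_eq_square)
    also have "y \<bullet> y = x \<bullet> (K *v x)"
    proof -
      have "y \<bullet> y = (K *v x) \<bullet> (R *v y)" unfolding y_def using sym_inner[OF symR, of "K *v x" "R *v (K *v x)"] by simp
      thus ?thesis using Ry by (simp add: inner_commute)
    qed
    finally show ?thesis .
  qed
  have Gaal: "Ga \<le> (1 + \<eta>) * al"
  proof -
    obtain v where v: "norm v = 1" "Bm *v v = Ga *\<^sub>R v" using eig_vec lmax_in[OF symB] Ga_def by blast
    have vv: "v \<bullet> v = 1" using v(1) by (simp add: power2_norm_eq_inner[symmetric])
    have "Ga = v \<bullet> (Bm *v v)" using v(2) vv by simp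
    also have "\<dots> = v \<bullet> (K *v v) + v \<bullet> (S *v v) + \<sigma>" using qB vv by simp
    also have "\<dots> \<le> (1 + \<eta>) * (v \<bullet> (K *v v) + \<sigma>)"
    proof -
      have "0 \<le> \<eta> * \<sigma>" using eta0 sigma_pos by simp
      thus ?thesis using SK[of v] by (simp add: algebra_simps)
    qed
    also have "v \<bullet> (K *v v) + \<sigma> = v \<bullet> (A *v v)" using qA vv by simp
    also have "(1 + \<eta>) * (v \<bullet> (A *v v)) \<le> (1 + \<eta>) * al"
      using rayleigh(2)[OF symA, of v] vv al_def eta0 by (intro mult_left_mono) auto
    finally show ?thesis .
  qed
  have cc: "al / be \<le> c" using cond_le unfolding cond_num_def al_def be_def A_def .
  have fin: "Ga/(a*al) \<le> norm zB / norm zA \<and> norm zB / norm zA \<le> a*Ga/al"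
    by (rule final_arith[OF bep gap beal alGa bega Gaal eta0 eta_lt cc a_def nzA norm_ge_zero h1 h2 h3 h4])
  show ?thesis using fin unfolding rho Ga_def al_def Bm_def A_def .
qed


end
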